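(* There is $\alpha_0>0$ such that for every $\alpha\in(0,\alpha_0]$ with $1/\alpha\in\mathbb{N}$ there is $\vartheta_0>0$ such that for every $0<\vartheta\leq\vartheta_0$ there is $n_0$ such that for all $n\geq n_0$ the following holds. Let $H=([n],E)$ be a $3$-uniform hypergraph with $d(i,j)\geq\min\left(i,j,\frac{n}{2}\right)+\alpha n$ for all $\{i,j\}\in[n]^{(2)}$, and let $\mathcal{R}\subseteq[n]$ be a set with $\frac{\vartheta^2}{2}n\leq|\mathcal{R}|\leq\vartheta^2 n$ such that, for some positive integer $L$, for all disjoint ordered pairs of distinct vertices $(x,y),(w,z)\in[n]^2$ there are at least $\vartheta|\mathcal{R}|^{L-2}/2$ tight paths of length $L$ in $H$ connecting $(x,y)$ and $(w,z)$ with all internal vertices in $\mathcal{R}$. Then for every $x\in[n]$, the number of $(x,\alpha)$-absorbers lying in $([n]\setminus\mathcal{R})^{4s(\alpha)}$ is at least $\left(\frac{\alpha n}{3}\right)^{4s(\alpha)}$, where $s(\alpha)=2/\alpha$.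
   Context: Vertices are the integers $[n]$, compared as integers. $d(v,w)=|\{x:\{v,w,x\}\in E\}|$ is the pair degree. A tight path of length $\ell$ is a 3-graph on distinct vertices $x_1,\dots,x_{\ell+2}$ with edges $x_ix_{i+1}x_{i+2}$, $i\in[\ell]$; we write it as the vertex sequence $x_1x_2\dots x_{\ell+2}$; it connects $(x_1,x_2)$ and $(x_{\ell+1},x_{\ell+2})$ and has internal vertices $x_3,\dots,x_\ell$. Absorber: with $s=s(\alpha)=2/\alpha$ (an even integer), for $x\in[n]$ a $4s$-tuple $(v_1,w_1,y_1,z_1,\dots,v_s,w_s,y_s,z_s)\in[n]^{4s}$ of distinct vertices is an $(x,\alpha)$-absorber in $H$ if (1) $v_1w_1xy_1z_1$ is a tight path in $H$; (2) for each $i\in[s-1]$, $v_iw_iy_{i+1}z_{i+1}$ and $v_{i+1}w_{i+1}y_iz_i$ are tight paths in $H$; (3) $v_sw_sy_sz_s$ is a tight path in $H$. *)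

theory Defs
  imports Main "HOL-Library.Extended_Real" Complex_Main
begin

definition three_graph :: "nat \<Rightarrow> nat set set \<Rightarrow> bool" where
  "three_graph n E \<longleftrightarrow> (\<forall>e\<in>E. e \<subseteq> {1..n} \<and> card e = 3)"

definition pair_deg :: "nat set set \<Rightarrow> nat \<Rightarrow> nat \<Rightarrow> nat" where
  "pair_deg E v w = card {x. {v, w, x} \<in> E}"

text \<open>A tight path, written as its vertex sequence x_1 ... x_(l+2) (l >= 1):
  distinct vertices, and each three consecutive vertices form an edge.\<close>
definition tight_path :: "nat set set \<Rightarrow> nat list \<Rightarrow> bool" where
  "tight_path E xs \<longleftrightarrow> distinct xs \<and> length xs \<ge> 3 \<and>
     (\<forall>i. i + 2 < length xs \<longrightarrow> {xs ! i, xs ! (i+1), xs ! (i+2)} \<in> E)"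

definition connecting_paths ::
  "nat set set \<Rightarrow> nat set \<Rightarrow> nat \<Rightarrow> nat \<Rightarrow> nat \<Rightarrow> nat \<Rightarrow> nat \<Rightarrow> nat list set" where
  "connecting_paths E R L x y w z =
     {p. tight_path E p \<and> length p = L + 2 \<and> p ! 0 = x \<and> p ! 1 = y \<and>
         p ! L = w \<and> p ! (L+1) = z \<and> (\<forall>i. 2 \<le> i \<and> i < L \<longrightarrow> p ! i \<in> R)}"

text \<open>s(alpha) = 2/alpha (an integer when 1/alpha is a natural number).\<close>
definition s_of :: "real \<Rightarrow> nat" where
  "s_of \<alpha> = nat \<lfloor>2 / \<alpha>\<rfloor>"

text \<open>(x,alpha)-absorber: a 4s-tuple (v_1,w_1,y_1,z_1,...,v_s,w_s,y_s,z_s) of distinct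
  vertices of [n], encoded as a list a with v_(i+1) = a!(4i), w_(i+1) = a!(4i+1),
  y_(i+1) = a!(4i+2), z_(i+1) = a!(4i+3) for i < s.\<close>
definition absorber :: "nat set set \<Rightarrow> nat \<Rightarrow> real \<Rightarrow> nat \<Rightarrow> nat list \<Rightarrow> bool" where
  "absorber E n \<alpha> x a \<longleftrightarrow>
     (let s = s_of \<alpha> in
       length a = 4 * s \<and> distinct a \<and> set a \<subseteq> {1..n} \<and>
       tight_path E [a ! 0, a ! 1, x, a ! 2, a ! 3] \<and>
       (\<forall>i. i + 1 < s \<longrightarrow>
          tight_path E [a ! (4*i), a ! (4*i+1), a ! (4*(i+1)+2), a ! (4*(i+1)+3)] \<and>
          tight_path E [a ! (4*(i+1)), a ! (4*(i+1)+1), a ! (4*i+2), a ! (4*i+3)]) \<and>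
       tight_path E [a ! (4*(s-1)), a ! (4*(s-1)+1), a ! (4*(s-1)+2), a ! (4*(s-1)+3)])"

end

theory Submission
  imports Defs
begin


lemma S_Suc_eq:
  "{q. length q = Suc k \<and> (\<forall>j<Suc k. ok (take j q) (q!j))} =
   (\<lambda>(p,u). p @ [u]) ` (SIGMA p:{q. length q = k \<and> (\<forall>j<k. ok (take j q) (q!j))}. {u. ok p u})"
proof (intro equalityI subsetI)
  fix q assume "q \<in> {q. length q = Suc k \<and> (\<forall>j<Suc k. ok (take j q) (q!j))}"
  hence q: "length q = Suc k" "\<forall>j<Suc k. ok (take j q) (q!j)" by auto
  define p where "p = take k q"
  define u where "u = q ! k"
  have qe: "q = p @ [u]" using q(1) unfolding p_def u_def
    by (simp add: take_Suc_conv_app_nth[symmetric])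
  have lp: "length p = k" using q(1) p_def by simp
  have "\<forall>j<k. ok (take j p) (p!j)"
  proof (intro allI impI)
    fix j assume "j < k"
    with q(2) have "ok (take j q) (q!j)" by simp
    thus "ok (take j p) (p!j)" using \<open>j<k\<close> unfolding p_def by simp
  qed
  moreover have "ok p u" using q(2)[rule_format, of k] p_def u_def by simp
  ultimately show "q \<in> (\<lambda>(p,u). p @ [u]) ` (SIGMA p:{q. length q = k \<and> (\<forall>j<k. ok (take j q) (q!j))}. {u. ok p u})"
    using qe lp by force
next
  fix q assume "q \<in> (\<lambda>(p,u). p @ [u]) ` (SIGMA p:{q. length q = k \<and> (\<forall>j<k. ok (take j q) (q!j))}. {u. ok p u})"
  then obtain p u where pu: "q = p @ [u]" "length p = k" "\<forall>j<k. ok (take j p) (p!j)" "ok p u" by auto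
  have "\<forall>j<Suc k. ok (take j q) (q!j)"
  proof (intro allI impI)
    fix j assume "j < Suc k"
    then consider "j < k" | "j = k" by linarith
    thus "ok (take j q) (q!j)"
    proof cases
      case 1 thus ?thesis using pu by (simp add: nth_append)
    next
      case 2 thus ?thesis using pu by (simp add: nth_append)
    qed
  qed
  thus "q \<in> {q. length q = Suc k \<and> (\<forall>j<Suc k. ok (take j q) (q!j))}" using pu by simp
qed

lemma seq_count:
  fixes ok :: "'a list \<Rightarrow> 'a \<Rightarrow> bool" and K :: real
  assumes K: "K \<ge> 0" and fin: "\<And>p. finite {u. ok p u}"
  and bnd: "\<And>p. length p < m \<Longrightarrow> (\<forall>j<length p. ok (take j p) (p!j)) \<Longrightarrow> K \<le> real (card {u. ok p u})"
  shows "K ^ m \<le> real (card {q. length q = m \<and> (\<forall>j<m. ok (take j q) (q!j))})"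
proof -
  define S where "S k = {q. length q = k \<and> (\<forall>j<k. ok (take j q) (q!j))}" for k
  have "k \<le> m \<longrightarrow> finite (S k) \<and> K ^ k \<le> real (card (S k))" for k
  proof (induction k)
    case 0
    have "S 0 = {[]}" unfolding S_def by auto
    thus ?case by simp
  next
    case (Suc k)
    show ?case
    proof
      assume km: "Suc k \<le> m"
      with Suc.IH have fS: "finite (S k)" and IH: "K ^ k \<le> real (card (S k))" by auto
      have eq: "S (Suc k) = (\<lambda>(p,u). p @ [u]) ` (SIGMA p:S k. {u. ok p u})"
        unfolding S_def by (rule S_Suc_eq)
      have inj: "inj_on (\<lambda>(p,u). p @ [u]) (SIGMA p:S k. {u. ok p u})"
        by (auto simp: inj_on_def)
      have fSig: "finite (SIGMA p:S k. {u. ok p u})" using fS fin by auto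
      have c: "card (S (Suc k)) = (\<Sum>p\<in>S k. card {u. ok p u})"
        unfolding eq card_image[OF inj] by (rule card_SigmaI[OF fS]) (simp add: fin)
      have "real (card (S (Suc k))) = (\<Sum>p\<in>S k. real (card {u. ok p u}))"
        unfolding c by simp
      also have "\<dots> \<ge> (\<Sum>p\<in>S k. K)"
        apply (rule sum_mono) apply (rule bnd) using km unfolding S_def by auto
      finally have "real (card (S (Suc k))) \<ge> real (card (S k)) * K" by simp
      moreover have "K ^ Suc k \<le> real (card (S k)) * K" using mult_right_mono[OF IH K] by (simp add: mult.commute)
      ultimately show "finite (S (Suc k)) \<and> K ^ Suc k \<le> real (card (S (Suc k)))"
        using eq fSig by auto
    qed
  qed
  thus ?thesis unfolding S_def by simp
qed


lemma up_count:
  fixes N :: "nat set" and L :: real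
  assumes "finite N" "0 \<notin> N" "L \<ge> 0"
  shows "real (card {u\<in>N. real u > L}) \<ge> real (card N) - L"
proof -
  have sub: "{u\<in>N. \<not> real u > L} \<subseteq> {1..nat \<lfloor>L\<rfloor>}"
  proof
    fix u assume u: "u \<in> {u\<in>N. \<not> real u > L}"
    have "u \<noteq> 0" proof assume "u = 0" thus False using u assms(2) by simp qed
    moreover have "real u \<le> L" using u by auto
    hence "u \<le> nat \<lfloor>L\<rfloor>" by linarith
    ultimately show "u \<in> {1..nat \<lfloor>L\<rfloor>}" by auto
  qed
  have "card {u\<in>N. \<not> real u > L} \<le> nat \<lfloor>L\<rfloor>"
    using card_mono[OF _ sub] by simp
  hence c1: "real (card {u\<in>N. \<not> real u > L}) \<le> L" using assms(3) by linarith
  have "card N = card {u\<in>N. real u > L} + card {u\<in>N. \<not> real u > L}"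
  proof -
    have "N = {u\<in>N. real u > L} \<union> {u\<in>N. \<not> real u > L}" by auto
    hence "card N = card ({u\<in>N. real u > L} \<union> {u\<in>N. \<not> real u > L})" by simp
    also have "\<dots> = card {u\<in>N. real u > L} + card {u\<in>N. \<not> real u > L}"
      by (rule card_Un_disjoint) (use assms(1) in auto)
    finally show ?thesis .
  qed
  thus ?thesis using c1 by linarith
qed

lemma card_inter_ge:
  fixes A B :: "nat set"
  assumes "A \<subseteq> {1..n}" "B \<subseteq> {1..n}"
  shows "real (card (A \<inter> B)) \<ge> real (card A) + real (card B) - real n"
proof -
  have f: "finite A" "finite B" using assms finite_subset by auto
  have "card (A \<union> B) \<le> n" using card_mono[of "{1..n}" "A \<union> B"] assms by auto
  moreover have "card (A \<union> B) + card (A \<inter> B) = card A + card B" using card_Un_Int[OF f] by simp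
  ultimately show ?thesis by linarith
qed

lemma card_diff_ge:
  fixes B C :: "'a set"
  assumes "finite C"
  shows "real (card (B - C)) \<ge> real (card B) - real (card C)"
proof (cases "finite B")
  case True
  have "card B - card C \<le> card (B - C)" by (rule diff_card_le_card_Diff[OF assms])
  thus ?thesis by linarith
next
  case False
  hence "infinite (B - C)" using assms by auto
  thus ?thesis using False by simp
qed

lemma edge3:
  assumes "three_graph n E" "{a, b, u} \<in> E"
  shows "u \<in> {1..n}" "u \<noteq> a" "u \<noteq> b" "a \<in> {1..n}" "b \<in> {1..n}" "a \<noteq> b"
proof -
  have e: "{a,b,u} \<subseteq> {1..n}" "card {a,b,u} = 3" using assms unfolding three_graph_def by auto
  show "u \<in> {1..n}" "a \<in> {1..n}" "b \<in> {1..n}" using e by auto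
  have c2: "card {p, q} \<le> 2" for p q :: nat by (cases "p = q") auto
  show "u \<noteq> a" proof assume "u = a" hence "{a,b,u} = {a,b}" by auto
    thus False using e c2[of a b] by simp qed
  show "u \<noteq> b" proof assume "u = b" hence "{a,b,u} = {a,b}" by auto
    thus False using e c2[of a b] by simp qed
  show "a \<noteq> b" proof assume "a = b" hence "{a,b,u} = {b,u}" by auto
    thus False using e c2[of b u] by simp qed
qed



lemma tp4: "tight_path E [a,b,c,d] \<longleftrightarrow> distinct [a,b,c,d] \<and> {a,b,c} \<in> E \<and> {b,c,d} \<in> E"
proof -
  have "(\<forall>i. i + 2 < length [a,b,c,d] \<longrightarrow> {[a,b,c,d] ! i, [a,b,c,d] ! (i+1), [a,b,c,d] ! (i+2)} \<in> E)
      \<longleftrightarrow> {a,b,c} \<in> E \<and> {b,c,d} \<in> E"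
  proof
    assume h: "\<forall>i. i + 2 < length [a,b,c,d] \<longrightarrow> {[a,b,c,d] ! i, [a,b,c,d] ! (i+1), [a,b,c,d] ! (i+2)} \<in> E"
    show "{a,b,c} \<in> E \<and> {b,c,d} \<in> E" using h[rule_format, of 0] h[rule_format, of 1] by simp
  next
    assume h: "{a,b,c} \<in> E \<and> {b,c,d} \<in> E"
    show "\<forall>i. i + 2 < length [a,b,c,d] \<longrightarrow> {[a,b,c,d] ! i, [a,b,c,d] ! (i+1), [a,b,c,d] ! (i+2)} \<in> E"
    proof (intro allI impI)
      fix i assume "i + 2 < length [a,b,c,d]"
      hence "i = 0 \<or> i = 1" by (auto simp: less_Suc_eq)
      thus "{[a,b,c,d] ! i, [a,b,c,d] ! (i+1), [a,b,c,d] ! (i+2)} \<in> E" using h by auto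
    qed
  qed
  thus ?thesis unfolding tight_path_def by simp
qed

lemma tp5: "tight_path E [a,b,c,d,e] \<longleftrightarrow> distinct [a,b,c,d,e] \<and> {a,b,c} \<in> E \<and> {b,c,d} \<in> E \<and> {c,d,e} \<in> E"
proof -
  have "(\<forall>i. i + 2 < length [a,b,c,d,e] \<longrightarrow> {[a,b,c,d,e] ! i, [a,b,c,d,e] ! (i+1), [a,b,c,d,e] ! (i+2)} \<in> E)
      \<longleftrightarrow> {a,b,c} \<in> E \<and> {b,c,d} \<in> E \<and> {c,d,e} \<in> E"
  proof
    assume h: "\<forall>i. i + 2 < length [a,b,c,d,e] \<longrightarrow> {[a,b,c,d,e] ! i, [a,b,c,d,e] ! (i+1), [a,b,c,d,e] ! (i+2)} \<in> E"
    show "{a,b,c} \<in> E \<and> {b,c,d} \<in> E \<and> {c,d,e} \<in> E"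
      using h[rule_format, of 0] h[rule_format, of 1] h[rule_format, of 2] by (simp add: numeral_eq_Suc)
  next
    assume h: "{a,b,c} \<in> E \<and> {b,c,d} \<in> E \<and> {c,d,e} \<in> E"
    show "\<forall>i. i + 2 < length [a,b,c,d,e] \<longrightarrow> {[a,b,c,d,e] ! i, [a,b,c,d,e] ! (i+1), [a,b,c,d,e] ! (i+2)} \<in> E"
    proof (intro allI impI)
      fix i assume "i + 2 < length [a,b,c,d,e]"
      hence "i = 0 \<or> i = 1 \<or> i = 2" by (auto simp: less_Suc_eq numeral_eq_Suc)
      thus "{[a,b,c,d,e] ! i, [a,b,c,d,e] ! (i+1), [a,b,c,d,e] ! (i+2)} \<in> E" using h by (auto simp: numeral_eq_Suc)
    qed
  qed
  thus ?thesis unfolding tight_path_def by simp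
qed

definition sig :: "nat \<Rightarrow> nat" where
  "sig k = (if k mod 4 = 0 then k + 2 else if k mod 4 = 2 then k - 2 else k)"

lemma sig_sig: "sig (sig k) = k"
proof -
  have "k mod 4 = 0 \<or> k mod 4 = 1 \<or> k mod 4 = 2 \<or> k mod 4 = 3" by arith
  moreover have "k mod 4 = 0 \<Longrightarrow> (k + 2) mod 4 = 2" by presburger
  moreover have "k mod 4 = 2 \<Longrightarrow> (k - 2) mod 4 = 0 \<and> k \<ge> 2" by presburger
  ultimately show ?thesis unfolding sig_def by auto
qed

lemma sig_lt: "k < 4 * s \<Longrightarrow> sig k < 4 * s"
proof -
  assume "k < 4 * s"
  moreover have "k mod 4 = 0 \<Longrightarrow> k < 4 * s \<Longrightarrow> k + 2 < 4 * s" by presburger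
  ultimately show ?thesis unfolding sig_def by auto
qed

lemma sig_vals: "sig (4*i) = 4*i+2" "sig (4*i+1) = 4*i+1" "sig (4*i+2) = 4*i" "sig (4*i+3) = 4*i+3"
  unfolding sig_def by presburger+

definition perm4 :: "nat list \<Rightarrow> nat list" where
  "perm4 q = map (\<lambda>k. q ! sig k) [0..<length q]"

lemma perm4_nth: "k < length q \<Longrightarrow> perm4 q ! k = q ! sig k"
  unfolding perm4_def by simp

lemma perm4_inj:
  assumes "length q = 4 * s" "length q' = 4 * s" "perm4 q = perm4 q'"
  shows "q = q'"
proof (rule nth_equalityI)
  show "length q = length q'" using assms by simp
  fix k assume k: "k < length q"
  have "sig k < 4 * s" using sig_lt k assms by simp
  hence "perm4 q ! sig k = perm4 q' ! sig k" using assms by simp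
  thus "q ! k = q' ! k" using perm4_nth[of "sig k" q] perm4_nth[of "sig k" q'] \<open>sig k < 4*s\<close> assms sig_sig
    by simp
qed


definition lbnd :: "real \<Rightarrow> nat \<Rightarrow> nat \<Rightarrow> real" where
  "lbnd c n i = min (real (Suc i) * c) (real n / 2)"

definition okc2 :: "nat set set \<Rightarrow> nat \<Rightarrow> real \<Rightarrow> nat \<Rightarrow> nat \<Rightarrow> nat list \<Rightarrow> nat \<Rightarrow> bool" where
  "okc2 E n c s x p u \<longleftrightarrow> (let i = length p div 4; r = length p mod 4 in
    if i = 0 then real u > lbnd c n 0 \<and> (r = 1 \<longrightarrow> {x, p!0, u} \<in> E) \<and>
        (r = 2 \<longrightarrow> {p!1, x, u} \<in> E) \<and> (r = 3 \<longrightarrow> {x, p!0, u} \<in> E)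
    else (r = 0 \<longrightarrow> {p!(4*i-2), p!(4*i-3), u} \<in> E \<and> real u > lbnd c n i) \<and>
         (r = 1 \<longrightarrow> {p!(4*i-4), p!(4*i-1), u} \<in> E \<and> real u > lbnd c n i) \<and>
         (r = 2 \<longrightarrow> {p!(4*i+1), p!(4*i-4), u} \<in> E \<and>
             (if i + 1 = s then {p!(4*i+1), p!(4*i), u} \<in> E else real u > lbnd c n i)) \<and>
         (r = 3 \<longrightarrow> {p!(4*i-3), p!(4*i), u} \<in> E \<and>
             (if i + 1 = s then {p!(4*i+1), p!(4*i), u} \<in> E else real u > lbnd c n i)))"

definition okc :: "nat set set \<Rightarrow> nat \<Rightarrow> nat set \<Rightarrow> real \<Rightarrow> nat \<Rightarrow> nat \<Rightarrow> nat list \<Rightarrow> nat \<Rightarrow> bool" where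
  "okc E n R c s x p u \<longleftrightarrow> u \<in> {1..n} \<and> u \<notin> R \<and> u \<noteq> x \<and> u \<notin> set p \<and> okc2 E n c s x p u"

context
  fixes E :: "nat set set" and n :: nat and R :: "nat set" and \<alpha> c :: real and s x :: nat
  assumes tg: "three_graph n E"
  and deg: "\<forall>i\<in>{1..n}. \<forall>j\<in>{1..n}. i \<noteq> j \<longrightarrow>
            real (pair_deg E i j) \<ge> min (min (real i) (real j)) (real n / 2) + \<alpha> * real n"
  and Rsub: "R \<subseteq> {1..n}" and cardR: "real (card R) \<le> \<alpha> * real n / 16"
  and big: "12 * (1 + 4 * real s) \<le> \<alpha> * real n"
  and apos: "0 < \<alpha>" and ale: "\<alpha> \<le> 1" and sa: "real s * \<alpha> = 2"
  and cdef: "c = \<alpha> * real n / 2" and xin: "x \<in> {1..n}"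
begin

lemma s_ge2: "s \<ge> 2"
proof -
  have "real s = 2 / \<alpha>" using sa apos by (simp add: field_simps)
  also have "\<dots> \<ge> 2" using apos ale by (simp add: field_simps)
  finally show ?thesis by simp
qed

lemma c_facts: "c \<ge> 0" "c \<le> real n / 2" "real s * c = real n"
proof -
  have "\<alpha> * real n \<ge> 0" using apos by simp
  thus "c \<ge> 0" using cdef by simp
  have "\<alpha> * real n \<le> 1 * real n" by (rule mult_right_mono[OF ale]) simp
  thus "c \<le> real n / 2" using cdef by simp
  have "real s * c = (real s * \<alpha>) * real n / 2" using cdef by simp
  thus "real s * c = real n" using sa by simp
qed

lemma lbnd_le: "lbnd c n i \<le> real n / 2" unfolding lbnd_def by simp

lemma lbnd_mono: "i \<le> j \<Longrightarrow> lbnd c n i \<le> lbnd c n j"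
proof -
  assume "i \<le> j"
  hence "real (Suc i) * c \<le> real (Suc j) * c" using c_facts by (intro mult_right_mono) auto
  thus ?thesis unfolding lbnd_def by linarith
qed

lemma lbnd_step: "lbnd c n i + c \<ge> lbnd c n (Suc i)"
  unfolding lbnd_def using c_facts by (auto simp: algebra_simps)

lemma lbnd_last: "i + 2 \<ge> s \<Longrightarrow> lbnd c n i = real n / 2"
proof -
  assume "i + 2 \<ge> s"
  hence "real (Suc i) \<ge> real s - 1" by linarith
  hence "real (Suc i) * c \<ge> (real s - 1) * c" using c_facts by (intro mult_right_mono) auto
  moreover have "(real s - 1) * c \<ge> real n / 2" using c_facts by (simp add: algebra_simps)
  ultimately show ?thesis unfolding lbnd_def by simp
qed

lemma nbr_deg: "a \<in> {1..n} \<Longrightarrow> b \<in> {1..n} \<Longrightarrow> a \<noteq> b \<Longrightarrow>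
   real (card {u. {a,b,u} \<in> E}) \<ge> min (min (real a) (real b)) (real n / 2) + \<alpha> * real n"
  using deg unfolding pair_deg_def by auto

lemma nbr_sub: "{u. {a,b,u} \<in> E} \<subseteq> {1..n}" using edge3[OF tg] by auto

lemma up_nbr:
  assumes "a \<in> {1..n}" "b \<in> {1..n}" "a \<noteq> b" "min (min (real a) (real b)) (real n / 2) + c \<ge> L"
  shows "real (card {u. {a,b,u} \<in> E \<and> real u > L}) \<ge> \<alpha> * real n - c"
proof -
  define N where "N = {u. {a,b,u} \<in> E}"
  define M where "M = min (min (real a) (real b)) (real n / 2)"
  have Ns: "N \<subseteq> {1..n}" unfolding N_def by (rule nbr_sub)
  have fN: "finite N" "0 \<notin> N" using Ns finite_subset by auto
  have M0: "M \<ge> 0" unfolding M_def by simp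
  have "real (card {u\<in>N. real u > M + c}) \<ge> real (card N) - (M + c)"
    using up_count[OF fN] M0 c_facts by simp
  moreover have "real (card N) \<ge> M + \<alpha> * real n" using nbr_deg[OF assms(1-3)] unfolding N_def M_def .
  moreover have "card {u\<in>N. real u > M + c} \<le> card {u. {a,b,u} \<in> E \<and> real u > L}"
    apply (rule card_mono)
    using fN(1) unfolding N_def apply (simp add: rev_finite_subset)
    using assms(4) unfolding M_def by auto
  ultimately show ?thesis by linarith
qed

lemma inter_nbr:
  assumes "a \<in> {1..n}" "b \<in> {1..n}" "a \<noteq> b" "a' \<in> {1..n}" "b' \<in> {1..n}" "a' \<noteq> b'"
    "real a \<ge> real n / 2" "real b \<ge> real n / 2" "real a' \<ge> real n / 2" "real b' \<ge> real n / 2"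
  shows "real (card ({u. {a,b,u} \<in> E} \<inter> {u. {a',b',u} \<in> E})) \<ge> 2 * \<alpha> * real n"
proof -
  have "real (card {u. {a,b,u} \<in> E}) \<ge> real n / 2 + \<alpha> * real n"
    using nbr_deg[OF assms(1-3)] assms(7,8) by simp
  moreover have "real (card {u. {a',b',u} \<in> E}) \<ge> real n / 2 + \<alpha> * real n"
    using nbr_deg[OF assms(4-6)] assms(9,10) by simp
  ultimately show ?thesis using card_inter_ge[OF nbr_sub nbr_sub, of a b a' b'] by linarith
qed


abbreviation "ok \<equiv> okc E n R c s x"
abbreviation "Pq p \<equiv> (\<forall>j<length p. ok (take j p) (p!j))"

lemma inv_basic: "Pq p \<Longrightarrow> j < length p \<Longrightarrow> p!j \<in> {1..n} \<and> p!j \<notin> R \<and> p!j \<noteq> x"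
  unfolding okc_def by auto

lemma inv_ok2: "Pq p \<Longrightarrow> j < length p \<Longrightarrow> okc2 E n c s x (take j p) (p!j)"
  unfolding okc_def by auto

lemma inv_distinct: "Pq p \<Longrightarrow> distinct p"
proof -
  assume P: "Pq p"
  show "distinct p" unfolding distinct_conv_nth
  proof (intro allI impI)
    fix i j assume ij: "i < length p" "j < length p" "i \<noteq> j"
    show "p!i \<noteq> p!j"
    proof (cases "i < j")
      case True
      have "p!j \<notin> set (take j p)" using P ij unfolding okc_def by auto
      moreover have "p!i \<in> set (take j p)" using True ij by (metis in_set_conv_nth length_take min_less_iff_conj nth_take)
      ultimately show ?thesis by metis
    next
      case False
      hence "j < i" using ij by simp
      have "p!i \<notin> set (take i p)" using P ij unfolding okc_def by auto
      moreover have "p!j \<in> set (take i p)" using \<open>j<i\<close> ij by (metis in_set_conv_nth length_take min_less_iff_conj nth_take)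
      ultimately show ?thesis by metis
    qed
  qed
qed

lemma okc2_lb:
  assumes o: "okc2 E n c s x q u" and nf: "\<not> (Suc (length q div 4) = s \<and> 2 \<le> length q mod 4)"
  shows "real u > lbnd c n (length q div 4)"
proof -
  obtain i r where ir: "length q div 4 = i" "length q mod 4 = r" by blast
  have "r < 4" using ir by auto
  then consider "r = 0" | "r = 1" | "r = 2" | "r = 3" by linarith
  then show ?thesis using o nf unfolding okc2_def Let_def ir
    by cases (cases "i = 0"; simp)+
qed

lemma inv_lb: "Pq p \<Longrightarrow> j < length p \<Longrightarrow> \<not> (Suc (j div 4) = s \<and> 2 \<le> j mod 4) \<Longrightarrow>
   real (p!j) > lbnd c n (j div 4)"
proof -
  assume P: "Pq p" and j: "j < length p" and nf: "\<not> (Suc (j div 4) = s \<and> 2 \<le> j mod 4)"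
  have o: "okc2 E n c s x (take j p) (p!j)" by (rule inv_ok2[OF P j])
  have lt: "length (take j p) = j" using j by simp
  show ?thesis using okc2_lb[OF o] nf unfolding lt by blast
qed

lemma from_B:
  assumes lp: "length p \<le> 4 * s" and sub: "B - (R \<union> {x} \<union> set p) \<subseteq> {u. ok p u}"
    and cB: "real (card B) \<ge> \<alpha> * real n / 2"
  shows "real (card {u. ok p u}) \<ge> \<alpha> * real n / 3"
proof -
  have fin: "finite {u. ok p u}" by (rule finite_subset[of _ "{1..n}"]) (auto simp: okc_def)
  have fR: "finite (R \<union> {x} \<union> set p)" using Rsub finite_subset by auto
  have "card (R \<union> {x} \<union> set p) \<le> card R + card {x} + card (set p)"
    by (meson card_Un_le add_le_mono le_refl order_trans)
  also have "\<dots> \<le> card R + 1 + length p" using card_length by simp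
  finally have "real (card (R \<union> {x} \<union> set p)) \<le> real (card R) + 1 + real (length p)" by linarith
  moreover have "real (length p) \<le> 4 * real s" using lp by linarith
  moreover have "real (card (B - (R \<union> {x} \<union> set p))) \<le> real (card {u. ok p u})"
    using card_mono[OF fin sub] by simp
  moreover note card_diff_ge[OF fR, of B]
  ultimately have "real (card {u. ok p u}) \<ge> real (card B) - real (card R) - 1 - 4 * real s" by linarith
  moreover have "real (card B) - real (card R) - 1 - 4 * real s \<ge> \<alpha> * real n / 3"
  proof -
    have "real s \<ge> 0" by simp
    moreover have "12 + 48 * real s \<le> \<alpha> * real n" using big by (simp add: algebra_simps)
    ultimately show ?thesis using cardR cB by linarith
  qed
  ultimately show ?thesis by linarith
qed


lemma up_case:
  assumes "a \<in> {1..n}" "b \<in> {1..n}" "a \<noteq> b" "real a \<ge> lbnd c n k" "real b \<ge> lbnd c n k"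
  shows "real (card {u. {a,b,u} \<in> E \<and> real u > lbnd c n (Suc k)}) \<ge> \<alpha> * real n / 2"
proof -
  have "min (min (real a) (real b)) (real n / 2) \<ge> lbnd c n k" using assms(4,5) lbnd_le[of k] by simp
  hence "min (min (real a) (real b)) (real n / 2) + c \<ge> lbnd c n (Suc k)" using lbnd_step[of k] by linarith
  from up_nbr[OF assms(1-3) this] show ?thesis using cdef by linarith
qed

lemma up_case0:
  assumes "a \<in> {1..n}" "b \<in> {1..n}" "a \<noteq> b"
  shows "real (card {u. {a,b,u} \<in> E \<and> real u > lbnd c n 0}) \<ge> \<alpha> * real n / 2"
proof -
  have "min (min (real a) (real b)) (real n / 2) + c \<ge> lbnd c n 0" unfolding lbnd_def using c_facts by simp
  from up_nbr[OF assms(1-3) this] show ?thesis using cdef by linarith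
qed

lemma bound:
  assumes P: "Pq p" and lp: "length p < 4 * s"
  shows "real (card {u. ok p u}) \<ge> \<alpha> * real n / 3"
proof -
  define i where "i = length p div 4"
  define r where "r = length p mod 4"
  have t: "length p = 4*i + r" "r < 4" unfolding i_def r_def by auto
  have iS: "i < s" using lp t by linarith
  have dist: "distinct p" by (rule inv_distinct[OF P])
  have bas: "\<And>j. j < length p \<Longrightarrow> p!j \<in> {1..n} \<and> p!j \<noteq> x" using inv_basic[OF P] by blast
  have ne: "\<And>j k. j < length p \<Longrightarrow> k < length p \<Longrightarrow> j \<noteq> k \<Longrightarrow> p!j \<noteq> p!k"
    using dist by (simp add: nth_eq_iff_index_eq)
  have lbj: "\<And>j. j < length p \<Longrightarrow> \<not> (Suc (j div 4) = s \<and> 2 \<le> j mod 4) \<Longrightarrow> real (p!j) > lbnd c n (j div 4)"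
    using inv_lb[OF P] by blast
  have lbj': "\<And>j k' r'. j = 4*k'+r' \<Longrightarrow> r' < 4 \<Longrightarrow> j < length p \<Longrightarrow> \<not> (Suc k' = s \<and> 2 \<le> r') \<Longrightarrow> real (p!j) > lbnd c n k'"
  proof -
    fix j k' r' assume a: "j = 4*k'+r'" "r' < 4" "j < length p" "\<not> (Suc k' = s \<and> 2 \<le> r')"
    have "j div 4 = k'" "j mod 4 = r'" using a(1,2) by auto
    thus "real (p!j) > lbnd c n k'" using lbj[OF a(3)] a(4) by simp
  qed
  have lpl: "length p \<le> 4 * s" using lp by simp
  have id: "length p div 4 = i" "length p mod 4 = r" unfolding i_def r_def by auto
  have E3: "\<And>a b u. {a,b,u} \<in> E \<Longrightarrow> u \<in> {1..n}" using edge3[OF tg] by blast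
  consider "i = 0" "r = 0" | "i = 0" "r = 1" | "i = 0" "r = 2" | "i = 0" "r = 3"
    | "i > 0" "r = 0" | "i > 0" "r = 1" | "i > 0" "r = 2" "i + 1 \<noteq> s" | "i > 0" "r = 3" "i + 1 \<noteq> s"
    | "i > 0" "r = 2" "i + 1 = s" | "i > 0" "r = 3" "i + 1 = s"
  proof -
    have "r = 0 \<or> r = 1 \<or> r = 2 \<or> r = 3" using t(2) by arith
    moreover have "i = 0 \<or> i > 0" by arith
    moreover have "i + 1 = s \<or> i + 1 \<noteq> s" by blast
    ultimately show thesis using that by blast
  qed
  then show ?thesis
  proof cases
    case 1
    let ?B = "{u\<in>{1..n}. real u > lbnd c n 0}"
    have "real (card ?B) \<ge> real (card {1..n}) - lbnd c n 0"
      by (rule up_count) (auto simp: lbnd_def c_facts)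
    moreover have "lbnd c n 0 \<le> real n / 2" by (rule lbnd_le)
    moreover have "real (card {1..n}) = real n" by simp
    moreover have "\<alpha> * real n / 2 \<le> real n / 2" using c_facts(2) cdef by simp
    ultimately have "real (card ?B) \<ge> \<alpha> * real n / 2" by linarith
    moreover have "?B - (R \<union> {x} \<union> set p) \<subseteq> {u. ok p u}"
    proof
      fix u assume u: "u \<in> ?B - (R \<union> {x} \<union> set p)"
      have "okc2 E n c s x p u" using u 1 unfolding okc2_def Let_def id by simp
      thus "u \<in> {u. ok p u}" using u unfolding okc_def by blast
    qed
    ultimately show ?thesis using from_B[OF lpl] by blast
  next
    case 2
    have "real (card {u. {x, p!0, u} \<in> E \<and> real u > lbnd c n 0}) \<ge> \<alpha> * real n / 2"
      apply (rule up_case0) using bas[of 0] xin t 2 by auto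
    moreover have "{u. {x, p!0, u} \<in> E \<and> real u > lbnd c n 0} - (R \<union> {x} \<union> set p) \<subseteq> {u. ok p u}"
    proof
      fix u assume u: "u \<in> {u. {x, p!0, u} \<in> E \<and> real u > lbnd c n 0} - (R \<union> {x} \<union> set p)"
      have "okc2 E n c s x p u" using u 2 unfolding okc2_def Let_def id by simp
      thus "u \<in> {u. ok p u}" using u E3 unfolding okc_def by blast
    qed
    ultimately show ?thesis using from_B[OF lpl] by blast
  next
    case 3
    have "real (card {u. {p!1, x, u} \<in> E \<and> real u > lbnd c n 0}) \<ge> \<alpha> * real n / 2"
      apply (rule up_case0) using bas[of 1] xin t 3 by auto
    moreover have "{u. {p!1, x, u} \<in> E \<and> real u > lbnd c n 0} - (R \<union> {x} \<union> set p) \<subseteq> {u. ok p u}"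
    proof
      fix u assume u: "u \<in> {u. {p!1, x, u} \<in> E \<and> real u > lbnd c n 0} - (R \<union> {x} \<union> set p)"
      have "okc2 E n c s x p u" using u 3 unfolding okc2_def Let_def id by simp
      thus "u \<in> {u. ok p u}" using u E3 unfolding okc_def by blast
    qed
    ultimately show ?thesis using from_B[OF lpl] by blast
  next
    case 4
    have "real (card {u. {x, p!0, u} \<in> E \<and> real u > lbnd c n 0}) \<ge> \<alpha> * real n / 2"
      apply (rule up_case0) using bas[of 0] xin t 4 by auto
    moreover have "{u. {x, p!0, u} \<in> E \<and> real u > lbnd c n 0} - (R \<union> {x} \<union> set p) \<subseteq> {u. ok p u}"
    proof
      fix u assume u: "u \<in> {u. {x, p!0, u} \<in> E \<and> real u > lbnd c n 0} - (R \<union> {x} \<union> set p)"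
      have "okc2 E n c s x p u" using u 4 unfolding okc2_def Let_def id by simp
      thus "u \<in> {u. ok p u}" using u E3 unfolding okc_def by blast
    qed
    ultimately show ?thesis using from_B[OF lpl] by blast
  next
    case 5
    obtain k where k: "i = Suc k" using 5 by (cases i) auto
    have l1: "real (p!(4*i-2)) > lbnd c n k" using lbj'[of "4*i-2" k 2] t k 5 iS by simp
    have l2: "real (p!(4*i-3)) > lbnd c n k" using lbj'[of "4*i-3" k 1] t k 5 iS by simp
    have "real (card {u. {p!(4*i-2), p!(4*i-3), u} \<in> E \<and> real u > lbnd c n (Suc k)}) \<ge> \<alpha> * real n / 2"
      apply (rule up_case) using bas[of "4*i-2"] bas[of "4*i-3"] ne[of "4*i-2" "4*i-3"] t 5 k l1 l2 by auto
    moreover have "{u. {p!(4*i-2), p!(4*i-3), u} \<in> E \<and> real u > lbnd c n (Suc k)} - (R \<union> {x} \<union> set p) \<subseteq> {u. ok p u}"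
    proof
      fix u assume u: "u \<in> {u. {p!(4*i-2), p!(4*i-3), u} \<in> E \<and> real u > lbnd c n (Suc k)} - (R \<union> {x} \<union> set p)"
      have "okc2 E n c s x p u" using u 5 k unfolding okc2_def Let_def id by simp
      thus "u \<in> {u. ok p u}" using u E3 unfolding okc_def by blast
    qed
    ultimately show ?thesis using from_B[OF lpl] by blast
  next
    case 6
    obtain k where k: "i = Suc k" using 6 by (cases i) auto
    have l1: "real (p!(4*i-4)) > lbnd c n k" using lbj'[of "4*i-4" k 0] t k 6 iS by simp
    have l2: "real (p!(4*i-1)) > lbnd c n k" using lbj'[of "4*i-1" k 3] t k 6 iS by simp
    have "real (card {u. {p!(4*i-4), p!(4*i-1), u} \<in> E \<and> real u > lbnd c n (Suc k)}) \<ge> \<alpha> * real n / 2"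
      apply (rule up_case) using bas[of "4*i-4"] bas[of "4*i-1"] ne[of "4*i-4" "4*i-1"] t 6 k l1 l2 by auto
    moreover have "{u. {p!(4*i-4), p!(4*i-1), u} \<in> E \<and> real u > lbnd c n (Suc k)} - (R \<union> {x} \<union> set p) \<subseteq> {u. ok p u}"
    proof
      fix u assume u: "u \<in> {u. {p!(4*i-4), p!(4*i-1), u} \<in> E \<and> real u > lbnd c n (Suc k)} - (R \<union> {x} \<union> set p)"
      have "okc2 E n c s x p u" using u 6 k unfolding okc2_def Let_def id by simp
      thus "u \<in> {u. ok p u}" using u E3 unfolding okc_def by blast
    qed
    ultimately show ?thesis using from_B[OF lpl] by blast
  next
    case 7
    obtain k where k: "i = Suc k" using 7 by (cases i) auto
    have l1: "real (p!(4*i+1)) > lbnd c n i" using lbj'[of "4*i+1" i 1] t k 7 iS by simp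
    hence l1': "real (p!(4*i+1)) > lbnd c n k" using lbnd_mono[of k i] k by simp
    have l2: "real (p!(4*i-4)) > lbnd c n k" using lbj'[of "4*i-4" k 0] t k 7 iS by simp
    have "real (card {u. {p!(4*i+1), p!(4*i-4), u} \<in> E \<and> real u > lbnd c n (Suc k)}) \<ge> \<alpha> * real n / 2"
      apply (rule up_case) using bas[of "4*i+1"] bas[of "4*i-4"] ne[of "4*i+1" "4*i-4"] t 7 k l1' l2 by auto
    moreover have "{u. {p!(4*i+1), p!(4*i-4), u} \<in> E \<and> real u > lbnd c n (Suc k)} - (R \<union> {x} \<union> set p) \<subseteq> {u. ok p u}"
    proof
      fix u assume u: "u \<in> {u. {p!(4*i+1), p!(4*i-4), u} \<in> E \<and> real u > lbnd c n (Suc k)} - (R \<union> {x} \<union> set p)"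
      have "okc2 E n c s x p u" using u 7 k unfolding okc2_def Let_def id by simp
      thus "u \<in> {u. ok p u}" using u E3 unfolding okc_def by blast
    qed
    ultimately show ?thesis using from_B[OF lpl] by blast
  next
    case 8
    obtain k where k: "i = Suc k" using 8 by (cases i) auto
    have l1: "real (p!(4*i-3)) > lbnd c n k" using lbj'[of "4*i-3" k 1] t k 8 iS by simp
    have l2: "real (p!(4*i)) > lbnd c n i" using lbj'[of "4*i" i 0] t k 8 iS by simp
    hence l2': "real (p!(4*i)) > lbnd c n k" using lbnd_mono[of k i] k by simp
    have "real (card {u. {p!(4*i-3), p!(4*i), u} \<in> E \<and> real u > lbnd c n (Suc k)}) \<ge> \<alpha> * real n / 2"
      apply (rule up_case) using bas[of "4*i-3"] bas[of "4*i"] ne[of "4*i-3" "4*i"] t 8 k l1 l2' by auto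
    moreover have "{u. {p!(4*i-3), p!(4*i), u} \<in> E \<and> real u > lbnd c n (Suc k)} - (R \<union> {x} \<union> set p) \<subseteq> {u. ok p u}"
    proof
      fix u assume u: "u \<in> {u. {p!(4*i-3), p!(4*i), u} \<in> E \<and> real u > lbnd c n (Suc k)} - (R \<union> {x} \<union> set p)"
      have "okc2 E n c s x p u" using u 8 k unfolding okc2_def Let_def id by simp
      thus "u \<in> {u. ok p u}" using u E3 unfolding okc_def by blast
    qed
    ultimately show ?thesis using from_B[OF lpl] by blast
  next
    case 9
    obtain k where k: "i = Suc k" using 9 by (cases i) auto
    have L1: "lbnd c n i = real n / 2" "lbnd c n k = real n / 2" using lbnd_last 9 k by auto
    have l1: "real (p!(4*i+1)) > real n / 2" using lbj'[of "4*i+1" i 1] t k 9 iS L1 by simp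
    have l2: "real (p!(4*i-4)) > real n / 2" using lbj'[of "4*i-4" k 0] t k 9 iS L1 by simp
    have l3: "real (p!(4*i)) > real n / 2" using lbj'[of "4*i" i 0] t k 9 iS L1 by simp
    let ?B = "{u. {p!(4*i+1), p!(4*i-4), u} \<in> E} \<inter> {u. {p!(4*i+1), p!(4*i), u} \<in> E}"
    have "real (card ?B) \<ge> 2 * \<alpha> * real n"
      apply (rule inter_nbr) using bas[of "4*i+1"] bas[of "4*i-4"] bas[of "4*i"]
        ne[of "4*i+1" "4*i-4"] ne[of "4*i+1" "4*i"] t 9 k l1 l2 l3 by auto
    hence "real (card ?B) \<ge> \<alpha> * real n / 2" using apos by (simp add: algebra_simps)
    moreover have "?B - (R \<union> {x} \<union> set p) \<subseteq> {u. ok p u}"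
    proof
      fix u assume u: "u \<in> ?B - (R \<union> {x} \<union> set p)"
      have "okc2 E n c s x p u" using u 9 k unfolding okc2_def Let_def id by simp
      thus "u \<in> {u. ok p u}" using u E3 unfolding okc_def by blast
    qed
    ultimately show ?thesis using from_B[OF lpl] by blast
  next
    case 10
    obtain k where k: "i = Suc k" using 10 by (cases i) auto
    have L1: "lbnd c n i = real n / 2" "lbnd c n k = real n / 2" using lbnd_last 10 k by auto
    have l1: "real (p!(4*i+1)) > real n / 2" using lbj'[of "4*i+1" i 1] t k 10 iS L1 by simp
    have l2: "real (p!(4*i-3)) > real n / 2" using lbj'[of "4*i-3" k 1] t k 10 iS L1 by simp
    have l3: "real (p!(4*i)) > real n / 2" using lbj'[of "4*i" i 0] t k 10 iS L1 by simp
    let ?B = "{u. {p!(4*i-3), p!(4*i), u} \<in> E} \<inter> {u. {p!(4*i+1), p!(4*i), u} \<in> E}"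
    have "real (card ?B) \<ge> 2 * \<alpha> * real n"
      apply (rule inter_nbr) using bas[of "4*i+1"] bas[of "4*i-3"] bas[of "4*i"]
        ne[of "4*i-3" "4*i"] ne[of "4*i+1" "4*i"] t 10 k l1 l2 l3 by auto
    hence "real (card ?B) \<ge> \<alpha> * real n / 2" using apos by (simp add: algebra_simps)
    moreover have "?B - (R \<union> {x} \<union> set p) \<subseteq> {u. ok p u}"
    proof
      fix u assume u: "u \<in> ?B - (R \<union> {x} \<union> set p)"
      have "okc2 E n c s x p u" using u 10 k unfolding okc2_def Let_def id by simp
      thus "u \<in> {u. ok p u}" using u E3 unfolding okc_def by blast
    qed
    ultimately show ?thesis using from_B[OF lpl] by blast
  qed
qed


lemma edges:
  assumes P: "Pq q" and lq: "length q = 4 * s"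
  shows "{x, q!0, q!1} \<in> E" "{q!1, x, q!2} \<in> E" "{x, q!0, q!3} \<in> E"
    "\<And>i. i + 1 < s \<Longrightarrow> {q!(4*i+2), q!(4*i+1), q!(4*i+4)} \<in> E"
    "\<And>i. i + 1 < s \<Longrightarrow> {q!(4*i), q!(4*i+3), q!(4*i+5)} \<in> E"
    "\<And>i. i + 1 < s \<Longrightarrow> {q!(4*i+5), q!(4*i), q!(4*i+6)} \<in> E"
    "\<And>i. i + 1 < s \<Longrightarrow> {q!(4*i+1), q!(4*i+4), q!(4*i+7)} \<in> E"
    "{q!(4*(s-1)+1), q!(4*(s-1)), q!(4*(s-1)+2)} \<in> E"
    "{q!(4*(s-1)+1), q!(4*(s-1)), q!(4*(s-1)+3)} \<in> E"
proof -
  have s2: "s \<ge> 2" by (rule s_ge2)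
  have at: "\<And>j i r. j = 4*i + r \<Longrightarrow> r < 4 \<Longrightarrow> j < length q \<Longrightarrow>
     okc2 E n c s x (take j q) (q!j) \<and> length (take j q) div 4 = i \<and> length (take j q) mod 4 = r"
    using inv_ok2[OF P] by auto
  show "{x, q!0, q!1} \<in> E" using at[of 1 0 1] lq s2 unfolding okc2_def Let_def by simp
  show "{q!1, x, q!2} \<in> E" using at[of 2 0 2] lq s2 unfolding okc2_def Let_def by simp
  show "{x, q!0, q!3} \<in> E" using at[of 3 0 3] lq s2 unfolding okc2_def Let_def by simp
  fix i assume i: "i + 1 < s"
  show "{q!(4*i+2), q!(4*i+1), q!(4*i+4)} \<in> E"
    using at[of "4*i+4" "Suc i" 0] lq i unfolding okc2_def Let_def by simp
  show "{q!(4*i), q!(4*i+3), q!(4*i+5)} \<in> E"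
    using at[of "4*i+5" "Suc i" 1] lq i unfolding okc2_def Let_def by (simp add: add.commute)
  show "{q!(4*i+5), q!(4*i), q!(4*i+6)} \<in> E"
    using at[of "4*i+6" "Suc i" 2] lq i unfolding okc2_def Let_def by (simp add: add.commute)
  show "{q!(4*i+1), q!(4*i+4), q!(4*i+7)} \<in> E"
    using at[of "4*i+7" "Suc i" 3] lq i unfolding okc2_def Let_def by (simp add: add.commute)
next
  have s2: "s \<ge> 2" by (rule s_ge2)
  have at: "\<And>j i r. j = 4*i + r \<Longrightarrow> r < 4 \<Longrightarrow> j < length q \<Longrightarrow>
     okc2 E n c s x (take j q) (q!j) \<and> length (take j q) div 4 = i \<and> length (take j q) mod 4 = r"
    using inv_ok2[OF P] by auto
  obtain m where m: "s = Suc (Suc m)" using s2 by (metis add_2_eq_Suc le_Suc_ex)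
  have mm: "s - 1 = Suc m" using m by simp
  show "{q!(4*(s-1)+1), q!(4*(s-1)), q!(4*(s-1)+2)} \<in> E"
    using at[of "4*(s-1)+2" "Suc m" 2] lq m unfolding okc2_def Let_def mm by simp
  show "{q!(4*(s-1)+1), q!(4*(s-1)), q!(4*(s-1)+3)} \<in> E"
    using at[of "4*(s-1)+3" "Suc m" 3] lq m unfolding okc2_def Let_def mm by simp
qed


lemma absorber_perm:
  assumes P: "Pq q" and lq: "length q = 4 * s" and so: "s_of \<alpha> = s"
  shows "absorber E n \<alpha> x (perm4 q) \<and> set (perm4 q) \<subseteq> {1..n} - R"
proof -
  have s2: "s \<ge> 2" by (rule s_ge2)
  have dq: "distinct q" by (rule inv_distinct[OF P])
  have bq: "\<And>j. j < length q \<Longrightarrow> q!j \<in> {1..n} \<and> q!j \<notin> R \<and> q!j \<noteq> x" using inv_basic[OF P] by blast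
  have xq: "x \<notin> set q" using bq by (metis in_set_conv_nth)
  have ne: "\<And>j k. j < 4*s \<Longrightarrow> k < 4*s \<Longrightarrow> (q!j = q!k) = (j = k)"
    using dq lq by (simp add: nth_eq_iff_index_eq)
  have lp: "length (perm4 q) = 4 * s" unfolding perm4_def using lq by simp
  have nth: "\<And>i. i < s \<Longrightarrow> perm4 q ! (4*i) = q!(4*i+2) \<and> perm4 q ! (4*i+1) = q!(4*i+1) \<and>
      perm4 q ! (4*i+2) = q!(4*i) \<and> perm4 q ! (4*i+3) = q!(4*i+3)"
    using perm4_nth lq sig_vals by simp
  have sub: "set (perm4 q) \<subseteq> set q"
  proof
    fix v assume "v \<in> set (perm4 q)"
    then obtain k where "k < 4 * s" "v = q ! sig k" unfolding perm4_def using lq by auto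
    thus "v \<in> set q" using sig_lt lq by simp
  qed
  have setq: "set q \<subseteq> {1..n} - R" using bq by (auto simp: in_set_conv_nth)
  have dp: "distinct (perm4 q)"
    unfolding perm4_def distinct_map
  proof
    show "distinct [0..<length q]" by simp
    show "inj_on (\<lambda>k. q ! sig k) (set [0..<length q])"
    proof (rule inj_onI)
      fix k k' assume "k \<in> set [0..<length q]" "k' \<in> set [0..<length q]" "q ! sig k = q ! sig k'"
      hence "sig k = sig k'" using ne sig_lt lq by auto
      hence "sig (sig k) = sig (sig k')" by simp
      thus "k = k'" by (simp add: sig_sig)
    qed
  qed
  have e: "{x, q!0, q!1} \<in> E" "{q!1, x, q!2} \<in> E" "{x, q!0, q!3} \<in> E"
    using edges[OF P lq] by auto
  note eY = edges(4)[OF P lq] and eW = edges(5)[OF P lq] and eV = edges(6)[OF P lq]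
    and eZ = edges(7)[OF P lq] and eVf = edges(8)[OF P lq] and eZf = edges(9)[OF P lq]
  have n0: "perm4 q ! 0 = q!2" "perm4 q ! 1 = q!1" "perm4 q ! 2 = q!0" "perm4 q ! 3 = q!3"
  proof -
    have sg: "sig 0 = 2" "sig 1 = 1" "sig 2 = 0" "sig 3 = 3" by (simp_all add: sig_def)
    have "0 < length q" "1 < length q" "2 < length q" "3 < length q" using lq s2 by auto
    thus "perm4 q ! 0 = q!2" "perm4 q ! 1 = q!1" "perm4 q ! 2 = q!0" "perm4 q ! 3 = q!3"
      using perm4_nth[of _ q] sg by metis+
  qed
  have first: "tight_path E [perm4 q ! 0, perm4 q ! 1, x, perm4 q ! 2, perm4 q ! 3]"
    unfolding tp5 n0 using e bq[of 0] bq[of 1] bq[of 2] bq[of 3] lq ne[of 0 1] ne[of 0 2] ne[of 0 3] ne[of 1 2] ne[of 1 3] ne[of 2 3] s2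
    by (auto simp: insert_commute)
  have mid: "tight_path E [perm4 q ! (4*i), perm4 q ! (4*i+1), perm4 q ! (4*(i+1)+2), perm4 q ! (4*(i+1)+3)] \<and>
          tight_path E [perm4 q ! (4*(i+1)), perm4 q ! (4*(i+1)+1), perm4 q ! (4*i+2), perm4 q ! (4*i+3)]"
    if i: "i + 1 < s" for i
  proof -
    have a: "perm4 q ! (4*i) = q!(4*i+2)" "perm4 q ! (4*i+1) = q!(4*i+1)"
      "perm4 q ! (4*i+2) = q!(4*i)" "perm4 q ! (4*i+3) = q!(4*i+3)" using nth[of i] i by auto
    have b: "perm4 q ! (4*(i+1)) = q!(4*i+6)" "perm4 q ! (4*(i+1)+1) = q!(4*i+5)"
      "perm4 q ! (4*(i+1)+2) = q!(4*i+4)" "perm4 q ! (4*(i+1)+3) = q!(4*i+7)"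
      using nth[of "i+1"] i by (auto simp: algebra_simps)
    have d1: "distinct [q!(4*i+2), q!(4*i+1), q!(4*i+4), q!(4*i+7)]"
      using i ne by simp
    have d2: "distinct [q!(4*i+6), q!(4*i+5), q!(4*i), q!(4*i+3)]"
      using i ne by simp
    show ?thesis unfolding a b tp4 using d1 d2 eY[OF i] eZ[OF i] eV[OF i] eW[OF i]
      by (auto simp: insert_commute)
  qed
  have last: "tight_path E [perm4 q ! (4*(s-1)), perm4 q ! (4*(s-1)+1), perm4 q ! (4*(s-1)+2), perm4 q ! (4*(s-1)+3)]"
  proof -
    have a: "perm4 q ! (4*(s-1)) = q!(4*(s-1)+2)" "perm4 q ! (4*(s-1)+1) = q!(4*(s-1)+1)"
      "perm4 q ! (4*(s-1)+2) = q!(4*(s-1))" "perm4 q ! (4*(s-1)+3) = q!(4*(s-1)+3)"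
      using nth[of "s-1"] s2 by auto
    have d: "distinct [q!(4*(s-1)+2), q!(4*(s-1)+1), q!(4*(s-1)), q!(4*(s-1)+3)]"
      using s2 ne by simp
    show ?thesis unfolding a tp4 using d eVf eZf by (auto simp: insert_commute)
  qed
  have "absorber E n \<alpha> x (perm4 q)"
    unfolding absorber_def Let_def so using lp dp sub setq first mid last by auto
  thus ?thesis using sub setq by auto
qed


lemma count_main:
  assumes so: "s_of \<alpha> = s"
  shows "(\<alpha> * real n / 3) ^ (4 * s) \<le> real (card {a. absorber E n \<alpha> x a \<and> set a \<subseteq> {1..n} - R})"
proof -
  define S where "S = {q. length q = 4 * s \<and> (\<forall>j<4 * s. ok (take j q) (q!j))}"
  have K0: "\<alpha> * real n / 3 \<ge> 0" using apos by simp
  have fin: "finite {u. ok p u}" for p by (rule finite_subset[of _ "{1..n}"]) (auto simp: okc_def)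
  have c1: "(\<alpha> * real n / 3) ^ (4 * s) \<le> real (card S)"
    unfolding S_def by (rule seq_count[OF K0 fin]) (rule bound, auto)
  have sub: "perm4 ` S \<subseteq> {a. absorber E n \<alpha> x a \<and> set a \<subseteq> {1..n} - R}"
    using absorber_perm[OF _ _ so] unfolding S_def by auto
  have inj: "inj_on perm4 S" unfolding S_def by (rule inj_onI) (use perm4_inj in auto)
  have finA: "finite {a. absorber E n \<alpha> x a \<and> set a \<subseteq> {1..n} - R}"
  proof (rule finite_subset)
    show "{a. absorber E n \<alpha> x a \<and> set a \<subseteq> {1..n} - R} \<subseteq> {a. set a \<subseteq> {1..n} \<and> length a = 4 * s}"
      unfolding absorber_def Let_def so by auto
    show "finite {a. set a \<subseteq> {1..n} \<and> length a = 4 * s}" by (rule finite_lists_length_eq) simp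
  qed
  have "card S = card (perm4 ` S)" using card_image[OF inj] by simp
  also have "\<dots> \<le> card {a. absorber E n \<alpha> x a \<and> set a \<subseteq> {1..n} - R}"
    by (rule card_mono[OF finA sub])
  finally show ?thesis using c1 by linarith
qed

end

theorem lemma5p2:
  shows "\<exists>\<alpha>0>0. \<forall>\<alpha>::real. 0 < \<alpha> \<and> \<alpha> \<le> \<alpha>0 \<and> (\<exists>k::nat. 1 / \<alpha> = real k) \<longrightarrow>
    (\<exists>\<theta>0>0. \<forall>\<theta>::real. 0 < \<theta> \<and> \<theta> \<le> \<theta>0 \<longrightarrow>
      (\<exists>n0::nat. \<forall>n\<ge>n0. \<forall>E R.
         three_graph n E \<and>
         (\<forall>i\<in>{1..n}. \<forall>j\<in>{1..n}. i \<noteq> j \<longrightarrow>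
            real (pair_deg E i j) \<ge> min (min (real i) (real j)) (real n / 2) + \<alpha> * real n) \<and>
         R \<subseteq> {1..n} \<and>
         \<theta>^2 / 2 * real n \<le> real (card R) \<and> real (card R) \<le> \<theta>^2 * real n \<and>
         (\<exists>L::nat. L > 0 \<and>
            (\<forall>x\<in>{1..n}. \<forall>y\<in>{1..n}. \<forall>w\<in>{1..n}. \<forall>z\<in>{1..n}.
               x \<noteq> y \<and> w \<noteq> z \<and> {x, y} \<inter> {w, z} = {} \<longrightarrow>
               real (card (connecting_paths E R L x y w z)) \<ge> \<theta> * real (card R) ^ (L - 2) / 2))
         \<longrightarrow>
         (\<forall>x\<in>{1..n}.
            real (card {a. absorber E n \<alpha> x a \<and> set a \<subseteq> {1..n} - R})
              \<ge> (\<alpha> * real n / 3) ^ (4 * s_of \<alpha>))))"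
  proof (rule exI[of _ 1], intro conjI allI impI)
  show "(0::real) < 1" by simp
  fix \<alpha> :: real
  assume h: "0 < \<alpha> \<and> \<alpha> \<le> 1 \<and> (\<exists>k::nat. 1 / \<alpha> = real k)"
  then obtain k :: nat where k: "1 / \<alpha> = real k" by blast
  have apos: "0 < \<alpha>" and ale: "\<alpha> \<le> 1" using h by auto
  have ak: "\<alpha> * real k = 1" using k apos by (simp add: field_simps)
  define s where "s = s_of \<alpha>"
  have "2 / \<alpha> = real (2 * k)" using k by (simp add: divide_inverse)
  hence s2k: "s = 2 * k" unfolding s_def s_of_def by (metis floor_of_nat nat_int)
  have sa: "real s * \<alpha> = 2" using ak s2k by (simp add: algebra_simps)
  show "\<exists>\<theta>0>0. \<forall>\<theta>::real. 0 < \<theta> \<and> \<theta> \<le> \<theta>0 \<longrightarrow>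
      (\<exists>n0::nat. \<forall>n\<ge>n0. \<forall>E R.
         three_graph n E \<and>
         (\<forall>i\<in>{1..n}. \<forall>j\<in>{1..n}. i \<noteq> j \<longrightarrow>
            real (pair_deg E i j) \<ge> min (min (real i) (real j)) (real n / 2) + \<alpha> * real n) \<and>
         R \<subseteq> {1..n} \<and>
         \<theta>^2 / 2 * real n \<le> real (card R) \<and> real (card R) \<le> \<theta>^2 * real n \<and>
         (\<exists>L::nat. L > 0 \<and>
            (\<forall>x\<in>{1..n}. \<forall>y\<in>{1..n}. \<forall>w\<in>{1..n}. \<forall>z\<in>{1..n}.
               x \<noteq> y \<and> w \<noteq> z \<and> {x, y} \<inter> {w, z} = {} \<longrightarrow>
               real (card (connecting_paths E R L x y w z)) \<ge> \<theta> * real (card R) ^ (L - 2) / 2))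
         \<longrightarrow>
         (\<forall>x\<in>{1..n}.
            real (card {a. absorber E n \<alpha> x a \<and> set a \<subseteq> {1..n} - R})
              \<ge> (\<alpha> * real n / 3) ^ (4 * s_of \<alpha>)))"
  proof (rule exI[of _ "\<alpha> / 4"], intro conjI allI impI)
    show "0 < \<alpha> / 4" using apos by simp
    fix \<theta> :: real assume th: "0 < \<theta> \<and> \<theta> \<le> \<alpha> / 4"
    have th2: "\<theta>^2 \<le> \<alpha> / 16"
    proof -
      have "\<theta>^2 \<le> (\<alpha>/4)^2" using th by (intro power_mono) auto
      also have "\<dots> = \<alpha> * \<alpha> / 16" by (simp add: power2_eq_square)
      also have "\<dots> \<le> 1 * \<alpha> / 16" using apos ale by (intro divide_right_mono mult_right_mono) auto
      finally show ?thesis by simp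
    qed
    show "\<exists>n0::nat. \<forall>n\<ge>n0. \<forall>E R.
         three_graph n E \<and>
         (\<forall>i\<in>{1..n}. \<forall>j\<in>{1..n}. i \<noteq> j \<longrightarrow>
            real (pair_deg E i j) \<ge> min (min (real i) (real j)) (real n / 2) + \<alpha> * real n) \<and>
         R \<subseteq> {1..n} \<and>
         \<theta>^2 / 2 * real n \<le> real (card R) \<and> real (card R) \<le> \<theta>^2 * real n \<and>
         (\<exists>L::nat. L > 0 \<and>
            (\<forall>x\<in>{1..n}. \<forall>y\<in>{1..n}. \<forall>w\<in>{1..n}. \<forall>z\<in>{1..n}.
               x \<noteq> y \<and> w \<noteq> z \<and> {x, y} \<inter> {w, z} = {} \<longrightarrow>
               real (card (connecting_paths E R L x y w z)) \<ge> \<theta> * real (card R) ^ (L - 2) / 2))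
         \<longrightarrow>
         (\<forall>x\<in>{1..n}.
            real (card {a. absorber E n \<alpha> x a \<and> set a \<subseteq> {1..n} - R})
              \<ge> (\<alpha> * real n / 3) ^ (4 * s_of \<alpha>))"
    proof (rule exI[of _ "12 * (1 + 4 * s) * k"], intro allI impI ballI)
      fix n E R x
      assume nn: "12 * (1 + 4 * s) * k \<le> n"
      assume H: "three_graph n E \<and>
         (\<forall>i\<in>{1..n}. \<forall>j\<in>{1..n}. i \<noteq> j \<longrightarrow>
            real (pair_deg E i j) \<ge> min (min (real i) (real j)) (real n / 2) + \<alpha> * real n) \<and>
         R \<subseteq> {1..n} \<and>
         \<theta>^2 / 2 * real n \<le> real (card R) \<and> real (card R) \<le> \<theta>^2 * real n \<and>
         (\<exists>L::nat. L > 0 \<and>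
            (\<forall>x\<in>{1..n}. \<forall>y\<in>{1..n}. \<forall>w\<in>{1..n}. \<forall>z\<in>{1..n}.
               x \<noteq> y \<and> w \<noteq> z \<and> {x, y} \<inter> {w, z} = {} \<longrightarrow>
               real (card (connecting_paths E R L x y w z)) \<ge> \<theta> * real (card R) ^ (L - 2) / 2))"
      assume xin: "x \<in> {1..n}"
      have tg: "three_graph n E" and deg: "\<forall>i\<in>{1..n}. \<forall>j\<in>{1..n}. i \<noteq> j \<longrightarrow>
            real (pair_deg E i j) \<ge> min (min (real i) (real j)) (real n / 2) + \<alpha> * real n"
        and Rsub: "R \<subseteq> {1..n}" and cR: "real (card R) \<le> \<theta>^2 * real n" using H by auto
      have cardR: "real (card R) \<le> \<alpha> * real n / 16"
      proof -
        have "\<theta>^2 * real n \<le> \<alpha> / 16 * real n" using th2 by (intro mult_right_mono) auto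
        thus ?thesis using cR by simp
      qed
      have big: "12 * (1 + 4 * real s) \<le> \<alpha> * real n"
      proof -
        have "real (12 * (1 + 4 * s) * k) \<le> real n" using nn by linarith
        hence "12 * (1 + 4 * real s) * real k \<le> real n" by simp
        hence "\<alpha> * (12 * (1 + 4 * real s) * real k) \<le> \<alpha> * real n" using apos by (intro mult_left_mono) auto
        moreover have "\<alpha> * (12 * (1 + 4 * real s) * real k) = 12 * (1 + 4 * real s)"
        proof -
          have "\<alpha> * (12 * (1 + 4 * real s) * real k) = (\<alpha> * real k) * (12 * (1 + 4 * real s))"
            by (simp only: ac_simps)
          thus ?thesis using ak by simp
        qed
        ultimately show ?thesis by linarith
      qed
      show "(\<alpha> * real n / 3) ^ (4 * s_of \<alpha>) \<le> real (card {a. absorber E n \<alpha> x a \<and> set a \<subseteq> {1..n} - R})"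
        using count_main[OF tg deg Rsub cardR big apos ale sa refl xin s_def[symmetric]] s_def by simp
    qed
  qed
qed

end
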